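(* Let $n\ge1$, $\sigma\in\mathcal{S}_n$, $\epsilon\in\mathbb{R}$, and let $F_1,\dots,F_{n+1}$ be real numbers. Assign to each index $i\in\{1,\dots,n+1\}$ a label in $\{Q,P\}$: index $1$ has label $Q$, index $n+1$ has label $P$, and for $1<i\le n$ index $i$ has label $Q$ if $\sigma(i)>\sigma(i-1)$ and $P$ otherwise. For $k=1,\dots,n$ define $X_\sigma(k)=k\epsilon+\imath\big(F_{\sigma^{-1}(n)}+\dots+F_{\sigma^{-1}(n-k+1)}-F_{\sigma^{-1}(n)+1}-\dots-F_{\sigma^{-1}(n-k+1)+1}\big)$. Then for every $k\in\{1,\dots,n\}$, every index in $S^<_\sigma(n-k+1)$ has label $Q$, every index in $S^>_\sigma(n-k+1)$ has label $P$, and $X_\sigma(k)=k\epsilon+\imath\sum_{j\in S^<_\sigma(n-k+1)}F_j-\imath\sum_{j\in S^>_\sigma(n-k+1)}F_j$.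
   Context: Let $\bar\sigma=(\bar\sigma(1),\dots,\bar\sigma(n+2))=(0,\sigma(1),\dots,\sigma(n),0)$. For $m\in\{1,\dots,n\}$, $S^<_\sigma(m)=\{i:1\le i\le n+1,\ \bar\sigma(i)<m\le\bar\sigma(i+1)\}$ and $S^>_\sigma(m)=\{i:1\le i\le n+1,\ \bar\sigma(i)\ge m>\bar\sigma(i+1)\}$. *)

theory Defs
  imports Complex_Main "HOL-Combinatorics.Permutations"
begin

definition sigbar :: "nat \<Rightarrow> (nat \<Rightarrow> nat) \<Rightarrow> nat \<Rightarrow> nat" where
  "sigbar n \<sigma> i = (if i = 1 \<or> i = n + 2 then 0 else \<sigma> (i - 1))"

definition Slt :: "nat \<Rightarrow> (nat \<Rightarrow> nat) \<Rightarrow> nat \<Rightarrow> nat set" where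
  "Slt n \<sigma> m = {i. 1 \<le> i \<and> i \<le> n + 1 \<and> sigbar n \<sigma> i < m \<and> m \<le> sigbar n \<sigma> (i + 1)}"

definition Sgt :: "nat \<Rightarrow> (nat \<Rightarrow> nat) \<Rightarrow> nat \<Rightarrow> nat set" where
  "Sgt n \<sigma> m = {i. 1 \<le> i \<and> i \<le> n + 1 \<and> m \<le> sigbar n \<sigma> i \<and> sigbar n \<sigma> (i + 1) < m}"

datatype label = Q | P

definition lab :: "nat \<Rightarrow> (nat \<Rightarrow> nat) \<Rightarrow> nat \<Rightarrow> label" where
  "lab n \<sigma> i = (if i = 1 then Q else if i = n + 1 then P
                  else if \<sigma> i > \<sigma> (i - 1) then Q else P)"

definition Xsig :: "nat \<Rightarrow> (nat \<Rightarrow> nat) \<Rightarrow> real \<Rightarrow> (nat \<Rightarrow> real) \<Rightarrow> nat \<Rightarrow> complex" where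
  "Xsig n \<sigma> \<epsilon> F k = complex_of_real (real k * \<epsilon>) + \<i> * complex_of_real
      ((\<Sum>l\<in>{n - k + 1..n}. F (inv \<sigma> l)) - (\<Sum>l\<in>{n - k + 1..n}. F (inv \<sigma> l + 1)))"

end

theory Submission
  imports Defs
begin

lemma main_aux:
  fixes n m :: nat and \<sigma> :: "nat \<Rightarrow> nat" and F :: "nat \<Rightarrow> real"
  assumes n1: "n \<ge> 1" and p: "\<sigma> permutes {1..n}" and m1: "1 \<le> m"
  shows "(\<forall>i\<in>Slt n \<sigma> m. lab n \<sigma> i = Q) \<and>
     (\<forall>i\<in>Sgt n \<sigma> m. lab n \<sigma> i = P) \<and>
     (\<Sum>l\<in>{m..n}. F (inv \<sigma> l)) - (\<Sum>l\<in>{m..n}. F (inv \<sigma> l + 1))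
       = (\<Sum>j\<in>Slt n \<sigma> m. F j) - (\<Sum>j\<in>Sgt n \<sigma> m. F j)"
proof -
  have sb: "sigbar n \<sigma> i = (if i = 1 \<or> i = n + 2 then 0 else \<sigma> (i - 1))" for i
    by (simp add: sigbar_def)
  have rng: "j \<in> {1..n} \<Longrightarrow> \<sigma> j \<in> {1..n}" for j
    using p by (metis permutes_in_image)
  have invr: "l \<in> {1..n} \<Longrightarrow> inv \<sigma> l \<in> {1..n}" for l
    using p by (meson permutes_inv permutes_in_image)
  have ii: "inv \<sigma> (\<sigma> j) = j" for j using permutes_inverses(2)[OF p] by blast
  have si: "\<sigma> (inv \<sigma> l) = l" for l using permutes_inverses(1)[OF p] by blast
  have injs: "inj \<sigma>" using p permutes_inj by blast
  define A where "A = {i\<in>{1..n+1}. m \<le> sigbar n \<sigma> (i+1)}"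
  define B where "B = {i\<in>{1..n+1}. m \<le> sigbar n \<sigma> i}"
  have A': "A = {j\<in>{1..n}. m \<le> \<sigma> j}"
    using m1 by (auto simp: A_def sb)
  have B': "B = Suc ` A"
  proof
    show "B \<subseteq> Suc ` A"
    proof
      fix i assume "i \<in> B"
      then have "i \<ge> 2" "i \<le> n + 1" "m \<le> \<sigma> (i - 1)" using m1 by (auto simp: B_def sb split: if_splits)
      then have "i - 1 \<in> A" "i = Suc (i - 1)" by (auto simp: A')
      then show "i \<in> Suc ` A" by blast
    qed
    show "Suc ` A \<subseteq> B" using m1 by (auto simp: A' B_def sb)
  qed
  have slt: "Slt n \<sigma> m = A - B" using m1 by (auto simp: Slt_def A_def B_def)
  have sgt: "Sgt n \<sigma> m = B - A" using m1 by (auto simp: Sgt_def A_def B_def)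
  have finA: "finite A" "finite B" by (auto simp: A_def B_def)
  have imA: "{m..n} = \<sigma> ` A"
  proof
    show "{m..n} \<subseteq> \<sigma> ` A"
    proof
      fix l assume l: "l \<in> {m..n}"
      then have "inv \<sigma> l \<in> A" using invr[of l] m1 by (auto simp: A' si)
      then show "l \<in> \<sigma> ` A" using si[of l] by (metis image_eqI)
    qed
    show "\<sigma> ` A \<subseteq> {m..n}" using rng by (auto simp: A')
  qed
  have s1: "(\<Sum>l\<in>{m..n}. F (inv \<sigma> l)) = (\<Sum>j\<in>A. F j)"
    by (rule sum.reindex_cong[OF inj_on_subset[OF injs] imA]) (auto simp: ii)
  have s2: "(\<Sum>l\<in>{m..n}. F (inv \<sigma> l + 1)) = (\<Sum>j\<in>A. F (Suc j))"
    by (rule sum.reindex_cong[OF inj_on_subset[OF injs] imA]) (auto simp: ii)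
  have s3: "(\<Sum>j\<in>A. F (Suc j)) = (\<Sum>j\<in>B. F j)"
    unfolding B' by (simp add: sum.reindex)
  have s4: "(\<Sum>j\<in>A. F j) = (\<Sum>j\<in>A - B. F j) + (\<Sum>j\<in>A \<inter> B. F j)"
    using sum.Int_Diff[OF finA(1), of F B] by simp
  have s5: "(\<Sum>j\<in>B. F j) = (\<Sum>j\<in>B - A. F j) + (\<Sum>j\<in>A \<inter> B. F j)"
    using sum.Int_Diff[OF finA(2), of F A] by (simp add: Int_commute)
  have L1: "\<forall>i\<in>Slt n \<sigma> m. lab n \<sigma> i = Q"
    using m1 by (auto simp: Slt_def lab_def sb split: if_splits)
  have L2: "\<forall>i\<in>Sgt n \<sigma> m. lab n \<sigma> i = P"
    using m1 by (auto simp: Sgt_def lab_def sb split: if_splits)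
  show ?thesis using L1 L2 s1 s2 s3 s4 s5 slt sgt by simp
qed

theorem lemma4:
  fixes n :: nat and \<sigma> :: "nat \<Rightarrow> nat" and \<epsilon> :: real and F :: "nat \<Rightarrow> real"
  assumes "n \<ge> 1" and "\<sigma> permutes {1..n}"
  shows "\<forall>k\<in>{1..n}.
     (\<forall>i\<in>Slt n \<sigma> (n - k + 1). lab n \<sigma> i = Q) \<and>
     (\<forall>i\<in>Sgt n \<sigma> (n - k + 1). lab n \<sigma> i = P) \<and>
     Xsig n \<sigma> \<epsilon> F k = complex_of_real (real k * \<epsilon>)
        + \<i> * complex_of_real (\<Sum>j\<in>Slt n \<sigma> (n - k + 1). F j)
        - \<i> * complex_of_real (\<Sum>j\<in>Sgt n \<sigma> (n - k + 1). F j)"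
proof
  fix k assume k: "k \<in> {1..n}"
  have M1: "1 \<le> n - k + 1" by simp
  note M = main_aux[OF assms M1, of F]
  show "(\<forall>i\<in>Slt n \<sigma> (n - k + 1). lab n \<sigma> i = Q) \<and>
     (\<forall>i\<in>Sgt n \<sigma> (n - k + 1). lab n \<sigma> i = P) \<and>
     Xsig n \<sigma> \<epsilon> F k = complex_of_real (real k * \<epsilon>)
        + \<i> * complex_of_real (\<Sum>j\<in>Slt n \<sigma> (n - k + 1). F j)
        - \<i> * complex_of_real (\<Sum>j\<in>Sgt n \<sigma> (n - k + 1). F j)"
  proof -
    from M have c1: "\<forall>i\<in>Slt n \<sigma> (n - k + 1). lab n \<sigma> i = Q"
      and c2: "\<forall>i\<in>Sgt n \<sigma> (n - k + 1). lab n \<sigma> i = P"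
      and c3: "(\<Sum>l\<in>{n-k+1..n}. F (inv \<sigma> l)) - (\<Sum>l\<in>{n-k+1..n}. F (inv \<sigma> l + 1))
       = (\<Sum>j\<in>Slt n \<sigma> (n-k+1). F j) - (\<Sum>j\<in>Sgt n \<sigma> (n-k+1). F j)"
      by blast+
    have c4: "Xsig n \<sigma> \<epsilon> F k = complex_of_real (real k * \<epsilon>) + \<i> * complex_of_real
       ((\<Sum>j\<in>Slt n \<sigma> (n-k+1). F j) - (\<Sum>j\<in>Sgt n \<sigma> (n-k+1). F j))"
      unfolding Xsig_def c3 by (rule refl)
    show ?thesis using c1 c2 c4 by (simp add: of_real_diff right_diff_distrib)
  qed
qed

end
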